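(* Let $m,n\ge 2$ and let $\mathcal{C}$ be a Cauchy tensor of order $m$ and dimension $n$ with generating vector $c\in\mathbb{R}^n$ all of whose entries are nonnegative. Then every H-eigenvalue of $\mathcal{C}$ is nonnegative.
   Context: The Cauchy tensor with generating vector $c=(c_1,\dots,c_n)^T$ (with $c_{i_1}+\cdots+c_{i_m}\neq0$ for all indices) is $\mathcal{C}=(c_{i_1\cdots i_m})$, $c_{i_1\cdots i_m}=\frac{1}{c_{i_1}+\cdots+c_{i_m}}$, $i_j\in\{1,\dots,n\}$; it is symmetric. For $x\in\mathbb{R}^n$, $\mathcal{C}x^{m-1}\in\mathbb{R}^n$ has $i$-th component $\sum_{i_2,\dots,i_m}c_{ii_2\cdots i_m}x_{i_2}\cdots x_{i_m}$. A real number $\lambda$ is an H-eigenvalue of $\mathcal{C}$ if there is $x\in\mathbb{R}^n\setminus\{0\}$ with $\mathcal{C}x^{m-1}=\lambda x^{[m-1]}$, where $x^{[m-1]}=(x_1^{m-1},\dots,x_n^{m-1})^T$. *)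

theory Defs
  imports "HOL-Analysis.Analysis"
begin

text \<open>An order-m tensor of dimension CARD('n) is a function from index lists
  (i_1,...,i_m) (lists of length m over 'n) to reals.\<close>

definition cauchy_tensor :: "real ^ 'n \<Rightarrow> 'n list \<Rightarrow> real" where
  "cauchy_tensor c is = 1 / (\<Sum>j\<leftarrow>is. c $ j)"

definition cauchy_gen_ok :: "nat \<Rightarrow> real ^ 'n \<Rightarrow> bool" where
  "cauchy_gen_ok m c \<longleftrightarrow> (\<forall>is::'n list. length is = m \<longrightarrow> (\<Sum>j\<leftarrow>is. c $ j) \<noteq> 0)"

definition tensor_apply :: "nat \<Rightarrow> ('n::finite list \<Rightarrow> real) \<Rightarrow> real ^ 'n \<Rightarrow> real ^ 'n" where
  "tensor_apply m T x = (\<chi> i. \<Sum>js\<in>{js::'n list. length js = m - 1}.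
       T (i # js) * (\<Prod>j\<leftarrow>js. x $ j))"

definition H_eigenvalue :: "nat \<Rightarrow> ('n::finite list \<Rightarrow> real) \<Rightarrow> real \<Rightarrow> bool" where
  "H_eigenvalue m T lam \<longleftrightarrow> (\<exists>x::real^'n. x \<noteq> 0 \<and>
       tensor_apply m T x = (\<chi> i. lam * (x $ i) ^ (m - 1)))"

end

theory Submission
  imports Defs
begin

lemma finite_len: "finite {js::'n::finite list. length js = k}"
  using finite_lists_length_eq[of "UNIV::'n set" k] by simp

lemma sum_lists_Suc:
  fixes g :: "'n::finite list \<Rightarrow> 'b::comm_monoid_add"
  shows "(\<Sum>js\<in>{js. length js = Suc k}. g js) = (\<Sum>j\<in>UNIV. \<Sum>js\<in>{js. length js = k}. g (j#js))"
proof -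
  have eq: "{js::'n list. length js = Suc k} = (\<lambda>p. fst p # snd p) ` (UNIV \<times> {js. length js = k})"
    by (auto simp: length_Suc_conv image_iff)
  have inj: "inj_on (\<lambda>p::'n \<times> 'n list. fst p # snd p) (UNIV \<times> {js. length js = k})"
    by (auto simp: inj_on_def prod_eq_iff)
  show ?thesis unfolding eq sum.reindex[OF inj]
    using sum.cartesian_product[of "\<lambda>j js. g (j#js)" "{js. length js = k}" UNIV]
    by (simp add: case_prod_unfold)
qed

lemma sum_prod_power:
  fixes y :: "'n::finite \<Rightarrow> real"
  shows "(\<Sum>js\<in>{js::'n list. length js = k}. \<Prod>j\<leftarrow>js. y j) = (\<Sum>j\<in>UNIV. y j)^k"
proof (induction k)
  case 0
  have "{js::'n list. length js = 0} = {[]}" by auto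
  then show ?case by simp
next
  case (Suc k)
  show ?case unfolding sum_lists_Suc
    by (simp add: sum_distrib_left[symmetric] Suc sum_distrib_right[symmetric])
qed

lemma powr_sum_list: "(t::real) > 0 \<Longrightarrow> t powr (\<Sum>j\<leftarrow>js. f j) = (\<Prod>j\<leftarrow>js. t powr f j)"
  by (induction js) (auto simp: powr_add)

lemma prod_list_mult: "(\<Prod>j\<leftarrow>js. f j) * (\<Prod>j\<leftarrow>js. g j) = (\<Prod>j\<leftarrow>js. (f j * g j :: real))"
  by (induction js) (auto simp: algebra_simps)

lemma key:
  fixes x c :: "real^'n::finite" and a :: real
  assumes "even k" "a \<ge> 0"
    and pos: "\<And>js. length js = k \<Longrightarrow> a + (\<Sum>j\<leftarrow>js. c$j) > 0"
  shows "0 \<le> (\<Sum>js\<in>{js. length js = k}. (\<Prod>j\<leftarrow>js. x$j) / (a + (\<Sum>j\<leftarrow>js. c$j)))"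
proof -
  define L where "L = {js::'n list. length js = k}"
  define e where "e js = a + (\<Sum>j\<leftarrow>js. c$j)" for js
  define P where "P js = (\<Prod>j\<leftarrow>js. x$j)" for js
  define \<Phi> where "\<Phi> t = (\<Sum>js\<in>L. P js * t powr e js / e js)" for t
  have epos: "js \<in> L \<Longrightarrow> e js > 0" for js using pos by (auto simp: L_def e_def)
  have "\<Phi> 0 \<le> \<Phi> 1"
  proof (rule DERIV_nonneg_imp_increasing_open[of 0 1 \<Phi>])
    have cont: "continuous_on {0..1} (\<lambda>t. P js * t powr e js / e js)" if js: "js \<in> L" for js
    proof -
      have "continuous_on {0..1::real} (\<lambda>t. t powr e js)"
        by (rule continuous_on_powr') (use epos[OF js] in \<open>auto intro: continuous_on_id continuous_on_const\<close>)
      then show ?thesis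
        by (intro continuous_on_divide continuous_on_mult continuous_on_const) (use epos[OF js] in auto)
    qed
    show "continuous_on {0..1} \<Phi>" unfolding \<Phi>_def[abs_def]
      using continuous_on_sum[of L "{0..1}" "\<lambda>js t. P js * t powr e js / e js", OF cont] by simp
  next
    fix t :: real assume t: "0 < t" "t < 1"
    have d: "DERIV \<Phi> t :> (\<Sum>js\<in>L. P js * (e js * t powr (e js - 1)) / e js)"
      unfolding \<Phi>_def[abs_def]
      by (intro DERIV_sum DERIV_cdivide DERIV_cmult has_real_derivative_powr t)
    have "(\<Sum>js\<in>L. P js * (e js * t powr (e js - 1)) / e js) = (\<Sum>js\<in>L. P js * t powr e js) / t"
      using t by (auto simp: sum_divide_distrib powr_diff dest: epos intro!: sum.cong)
    also have "(\<Sum>js\<in>L. P js * t powr e js) = t powr a * (\<Sum>j\<in>UNIV. x$j * t powr (c$j))^k"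
      using t unfolding sum_prod_power[symmetric] L_def
      by (simp add: sum_distrib_left P_def e_def powr_add powr_sum_list prod_list_mult algebra_simps)
    finally have "(\<Sum>js\<in>L. P js * (e js * t powr (e js - 1)) / e js) \<ge> 0"
      using t assms(1) by (simp add: zero_le_even_power)
    with d show "\<exists>y. DERIV \<Phi> t :> y \<and> y \<ge> 0" by blast
  qed simp
  moreover have "\<Phi> 0 = 0" unfolding \<Phi>_def using epos by (simp add: sum.neutral)
  moreover have "\<Phi> 1 = (\<Sum>js\<in>L. P js / e js)" unfolding \<Phi>_def by simp
  ultimately show ?thesis by (simp add: L_def P_def e_def)
qed

theorem theorem3p3:
  fixes c :: "real ^ 'n" and m :: nat and lam :: real
  assumes "m \<ge> 2" and "CARD('n) \<ge> 2"
    and "cauchy_gen_ok m c"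
    and "\<forall>i. c $ i \<ge> 0"
    and "H_eigenvalue m (cauchy_tensor c) lam"
  shows "lam \<ge> 0"
proof -
  from assms(5) obtain x :: "real^'n" where x0: "x \<noteq> 0"
    and ev: "tensor_apply m (cauchy_tensor c) x = (\<chi> i. lam * (x $ i) ^ (m - 1))"
    unfolding H_eigenvalue_def by blast
  have comp: "(\<Sum>js\<in>{js. length js = m - 1}. (\<Prod>j\<leftarrow>js. x$j) / (c$i + (\<Sum>j\<leftarrow>js. c$j)))
      = lam * (x$i)^(m-1)" for i
  proof -
    have "tensor_apply m (cauchy_tensor c) x $ i = lam * (x$i)^(m-1)" using ev by simp
    thus ?thesis unfolding tensor_apply_def cauchy_tensor_def by simp
  qed
  have Snn: "0 \<le> (\<Sum>j\<leftarrow>js. c$j)" for js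
    using assms(4) by (induction js) auto
  have Spos: "length js = m \<Longrightarrow> 0 < (\<Sum>j\<leftarrow>js. c$j)" for js
    using assms(3) Snn[of js] unfolding cauchy_gen_ok_def by force
  have Spos': "length js = m - 1 \<Longrightarrow> 0 < c$i + (\<Sum>j\<leftarrow>js. c$j)" for js i
    using Spos[of "i#js"] assms(1) by simp
  obtain i where xi: "x$i \<noteq> 0" using x0 by (auto simp: vec_eq_iff)
  show ?thesis
  proof (cases "even m")
    case False
    then have ek: "even (m - 1)" using assms(1) by simp
    have "0 \<le> lam * (x$i)^(m-1)"
      unfolding comp[symmetric] by (rule key[OF ek]) (auto intro: Spos' simp: assms(4))
    moreover have "(x$i)^(m-1) > 0" using ek xi by (simp add: zero_less_power_eq)
    ultimately show ?thesis by (simp add: zero_le_mult_iff)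
  next
    case True
    have m: "m = Suc (m - 1)" using assms(1) by simp
    have "0 \<le> (\<Sum>js\<in>{js. length js = m}. (\<Prod>j\<leftarrow>js. x$j) / (0 + (\<Sum>j\<leftarrow>js. c$j)))"
      by (rule key[OF True]) (auto intro: Spos)
    also have "\<dots> = (\<Sum>i\<in>UNIV. x$i * (\<Sum>js\<in>{js. length js = m - 1}. (\<Prod>j\<leftarrow>js. x$j) / (c$i + (\<Sum>j\<leftarrow>js. c$j))))"
      by (subst m, subst sum_lists_Suc) (simp add: sum_distrib_left)
    also have "\<dots> = lam * (\<Sum>i\<in>UNIV. (x$i)^m)"
      unfolding comp by (subst m) (simp add: sum_distrib_left algebra_simps)
    finally have A: "0 \<le> lam * (\<Sum>i\<in>UNIV. (x$i)^m)" .
    have "(x$i)^m > 0" using True xi by (simp add: zero_less_power_eq)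
    moreover have "(x$i)^m \<le> (\<Sum>i\<in>UNIV. (x$i)^m)"
      by (rule member_le_sum) (auto simp: True zero_le_even_power)
    ultimately have "(\<Sum>i\<in>UNIV. (x$i)^m) > 0" by linarith
    with A show ?thesis by (simp add: zero_le_mult_iff)
  qed
qed

end
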